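(* Let $X$ be a regular topological space, let $\mathcal A(X)$ be a maximal strongly disjoint family of nonempty, regular open, $\varrho$-homogeneous subsets of $X$, and for $H\in\mathrm{RO}(X)$ let $\mathrm{tr}_X(H)=\{A\in\mathcal A(X): A\cap H\neq\emptyset\}$. Then for each $H\in\mathrm{RO}(X)$: (1) $\rho(H)=\prod\{\rho(A): A\in\mathrm{tr}_X(H)\}$; (2) $\rho(H)\ge 2^{|\mathrm{tr}_X(H)|}$; (3) $|\{B\in\mathrm{RO}(X): \mathrm{tr}_X(B)\subseteq\mathrm{tr}_X(H)\}|\le\rho(H)$.
   Context: $\mathrm{RO}(G)$ denotes the family of regular open subsets of an open set $G$ and $\rho(G)=|\mathrm{RO}(G)|$. An open set $A$ (as a subspace) is $\varrho$-homogeneous if $\rho(B)=\rho(A)$ for every nonempty regular open $B$ of $A$. A family $\mathcal E$ of subsets of $X$ is strongly disjoint if $\overline{E_0}\cap\overline{E_1}=\emptyset$ for all distinct $E_0,E_1\in\mathcal E$. *)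

theory Defs
  imports "HOL-Analysis.Analysis" "HOL-Library.Equipollence"
begin

definition regular_openin :: "'a topology \<Rightarrow> 'a set \<Rightarrow> bool" where
  "regular_openin X U \<longleftrightarrow> openin X U \<and> X interior_of (X closure_of U) = U"

definition RO :: "'a topology \<Rightarrow> 'a set \<Rightarrow> 'a set set" where
  "RO X G = {U. regular_openin (subtopology X G) U}"

definition rho_homogeneous :: "'a topology \<Rightarrow> 'a set \<Rightarrow> bool" where
  "rho_homogeneous X A \<longleftrightarrow>
     (\<forall>B \<in> RO X A. B \<noteq> {} \<longrightarrow> RO X B \<approx> RO X A)"

definition strongly_disjoint :: "'a topology \<Rightarrow> 'a set set \<Rightarrow> bool" where
  "strongly_disjoint X \<E> \<longleftrightarrow>
     (\<forall>E0 \<in> \<E>. \<forall>E1 \<in> \<E>. E0 \<noteq> E1 \<longrightarrow> (X closure_of E0) \<inter> (X closure_of E1) = {})"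

definition admissible_family :: "'a topology \<Rightarrow> 'a set set \<Rightarrow> bool" where
  "admissible_family X \<E> \<longleftrightarrow>
     (\<forall>A \<in> \<E>. A \<noteq> {} \<and> regular_openin X A \<and> rho_homogeneous X A) \<and>
     strongly_disjoint X \<E>"

definition maximal_admissible_family :: "'a topology \<Rightarrow> 'a set set \<Rightarrow> bool" where
  "maximal_admissible_family X \<A> \<longleftrightarrow>
     admissible_family X \<A> \<and>
     (\<forall>\<E>. admissible_family X \<E> \<and> \<A> \<subseteq> \<E> \<longrightarrow> \<E> = \<A>)"

definition tr :: "'a set set \<Rightarrow> 'a set \<Rightarrow> 'a set set" where
  "tr \<A> H = {A \<in> \<A>. A \<inter> H \<noteq> {}}"

end

theory Submission imports Defs begin

abbreviation roi :: "'a topology \<Rightarrow> 'a set \<Rightarrow> 'a set" where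
  "roi X S \<equiv> X interior_of (X closure_of S)"

lemma open_sub_roi: "openin X U \<Longrightarrow> U \<subseteq> roi X U"
  by (meson closure_of_subset interior_of_maximal openin_subset)

lemma roi_regular: "regular_openin X (roi X S)"
proof -
  have a: "roi X (roi X S) \<subseteq> roi X S"
    by (metis closure_of_closure_of closure_of_mono interior_of_mono interior_of_subset)
  have "roi X S \<subseteq> roi X (roi X S)" by (simp add: open_sub_roi)
  with a show ?thesis unfolding regular_openin_def by auto
qed

lemma reg_open: "regular_openin X U \<Longrightarrow> openin X U"
  unfolding regular_openin_def by (erule conjunct1)

lemma reg_roi: "regular_openin X U \<Longrightarrow> roi X U = U"
  unfolding regular_openin_def by (erule conjunct2)

lemma reg_intro: "openin X U \<Longrightarrow> roi X U = U \<Longrightarrow> regular_openin X U"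
  unfolding regular_openin_def by (rule conjI)

lemma roi_mono: "S \<subseteq> T \<Longrightarrow> roi X S \<subseteq> roi X T"
  by (simp add: closure_of_mono interior_of_mono)

lemma reg_Int: "regular_openin X U \<Longrightarrow> regular_openin X V \<Longrightarrow> regular_openin X (U \<inter> V)"
proof -
  assume u: "regular_openin X U" and v: "regular_openin X V"
  have o: "openin X (U \<inter> V)" using reg_open[OF u] reg_open[OF v] by (rule openin_Int)
  have "roi X (U \<inter> V) \<subseteq> roi X U" "roi X (U \<inter> V) \<subseteq> roi X V"
    by (simp_all add: roi_mono)
  then have "roi X (U \<inter> V) \<subseteq> U \<inter> V" using reg_roi[OF u] reg_roi[OF v] by blast
  with open_sub_roi[OF o] have "roi X (U \<inter> V) = U \<inter> V" by (rule subset_antisym[rotated])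
  with o show ?thesis by (rule reg_intro)
qed

lemma RO_eq:
  assumes "regular_openin X H"
  shows "RO X H = {U. regular_openin X U \<and> U \<subseteq> H}"
proof -
  have oH: "openin X H" using assms by (rule reg_open)
  have H: "roi X H = H" using assms by (rule reg_roi)
  have "regular_openin (subtopology X H) U \<longleftrightarrow> regular_openin X U \<and> U \<subseteq> H" for U
  proof
    assume r: "regular_openin (subtopology X H) U"
    then have "openin (subtopology X H) U" by (rule reg_open)
    then have oU: "openin X U" and UH: "U \<subseteq> H"
      using openin_open_subtopology[OF oH] by blast+
    have "subtopology X H interior_of (subtopology X H closure_of U) = H \<inter> roi X U"
      using oH by (simp add: closure_of_subtopology_open interior_of_subtopology_open interior_of_Int
          interior_of_openin) 
    then have "H \<inter> roi X U = U" using reg_roi[OF r] by simp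
    moreover have "roi X U \<subseteq> H" using roi_mono[OF UH, of X] H by simp
    ultimately have "roi X U = U" by blast
    then show "regular_openin X U \<and> U \<subseteq> H" using reg_intro[OF oU] UH by blast
  next
    assume r: "regular_openin X U \<and> U \<subseteq> H"
    have "subtopology X H interior_of (subtopology X H closure_of U) = H \<inter> roi X U"
      using oH by (simp add: closure_of_subtopology_open interior_of_subtopology_open interior_of_Int
          interior_of_openin) 
    moreover have "H \<inter> roi X U = U" using reg_roi[of X U] r by blast
    moreover have "openin (subtopology X H) U"
      using openin_open_subtopology[OF oH] reg_open[of X U] r by blast
    ultimately show "regular_openin (subtopology X H) U"
      by (simp add: reg_intro)
  qed
  then show ?thesis unfolding RO_def by blast
qed

lemma RO_mem: "regular_openin X H \<Longrightarrow> U \<in> RO X H \<longleftrightarrow> regular_openin X U \<and> U \<subseteq> H"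
  by (simp add: RO_eq)

lemma min_lepoll:
  fixes S :: "'b set set"
  assumes "S \<noteq> {}" shows "\<exists>A\<in>S. \<forall>B\<in>S. A \<lesssim> B"
proof -
  obtain A0 where "A0 \<in> S" using assms by auto
  then have "card_of A0 \<in> card_of ` S" by blast
  then obtain r where r: "r \<in> card_of ` S" and m: "\<And>y. (y, r) \<in> ordLess \<Longrightarrow> y \<notin> card_of ` S"
    by (rule wfE_min[OF wf_ordLess]) blast
  obtain A where A: "A \<in> S" "r = card_of A" using r by auto
  have "A \<lesssim> B" if "B \<in> S" for B
  proof -
    have "card_of B \<in> card_of ` S" using that by (rule imageI)
    then have "\<not> ((card_of B, card_of A) \<in> ordLess)" using m[of "card_of B"] A(2) by blast
    then have "(card_of A, card_of B) \<in> ordLeq"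
      using ordLess_or_ordLeq[OF card_of_Well_order card_of_Well_order, of B A] by blast
    then have "\<exists>f. inj_on f A \<and> f ` A \<subseteq> B" by (rule iffD2[OF card_of_ordLeq])
    then show ?thesis unfolding lepoll_def .
  qed
  then show ?thesis using A by blast
qed


lemma min_lepoll_fun:
  fixes f :: "'c \<Rightarrow> 'b set"
  assumes "F \<noteq> {}" shows "\<exists>W\<in>F. \<forall>W'\<in>F. f W \<lesssim> f W'"
proof -
  have "f ` F \<noteq> {}" using assms by simp
  from min_lepoll[OF this] obtain A where "A \<in> f ` F" "\<forall>B\<in>f ` F. A \<lesssim> B" by (elim bexE)
  then show ?thesis by auto
qed

lemma max_adm: "maximal_admissible_family X \<A> \<Longrightarrow> admissible_family X \<A>"
  unfolding maximal_admissible_family_def by (erule conjunct1)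

lemma max_max:
  assumes "maximal_admissible_family X \<A>" "admissible_family X \<E>" "\<A> \<subseteq> \<E>"
  shows "\<E> = \<A>"
proof -
  have "\<forall>\<E>. admissible_family X \<E> \<and> \<A> \<subseteq> \<E> \<longrightarrow> \<E> = \<A>"
    using assms(1) unfolding maximal_admissible_family_def by (rule conjunct2)
  then have "admissible_family X \<E> \<and> \<A> \<subseteq> \<E> \<longrightarrow> \<E> = \<A>" by (rule spec)
  moreover have "admissible_family X \<E> \<and> \<A> \<subseteq> \<E>" using assms(2,3) by (rule conjI)
  ultimately show ?thesis by (rule mp)
qed

lemma adm_elem: "admissible_family X \<A> \<Longrightarrow> A \<in> \<A> \<Longrightarrow> A \<noteq> {} \<and> regular_openin X A \<and> rho_homogeneous X A"
  unfolding admissible_family_def by (erule conjE, erule bspec, assumption)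

lemma adm_sd: "admissible_family X \<A> \<Longrightarrow> strongly_disjoint X \<A>"
  unfolding admissible_family_def by (erule conjunct2)

lemma adm_intro: "(\<And>A. A \<in> \<A> \<Longrightarrow> A \<noteq> {} \<and> regular_openin X A \<and> rho_homogeneous X A) \<Longrightarrow> strongly_disjoint X \<A> \<Longrightarrow> admissible_family X \<A>"
  unfolding admissible_family_def by (rule conjI[OF ballI])

lemma sd_elim: "strongly_disjoint X \<A> \<Longrightarrow> E0 \<in> \<A> \<Longrightarrow> E1 \<in> \<A> \<Longrightarrow> E0 \<noteq> E1 \<Longrightarrow> X closure_of E0 \<inter> X closure_of E1 = {}"
  unfolding strongly_disjoint_def by (drule bspec, assumption, drule bspec, assumption, erule mp, assumption)

lemma sd_insert:
  assumes "strongly_disjoint X \<A>" "\<And>A. A \<in> \<A> \<Longrightarrow> A \<noteq> W \<Longrightarrow> X closure_of A \<inter> X closure_of W = {}"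
  shows "strongly_disjoint X (insert W \<A>)"
  unfolding strongly_disjoint_def
proof (intro ballI impI)
  fix E0 E1 assume E: "E0 \<in> insert W \<A>" "E1 \<in> insert W \<A>" "E0 \<noteq> E1"
  have c: "X closure_of E0 \<inter> X closure_of E1 = X closure_of E1 \<inter> X closure_of E0" by (rule Int_commute)
  show "X closure_of E0 \<inter> X closure_of E1 = {}"
  proof (cases "E0 = W")
    case e0: True
    then have E1: "E1 \<in> \<A>" "E1 \<noteq> W" using E(2,3) by simp_all
    have "X closure_of E1 \<inter> X closure_of W = {}" by (rule assms(2)[OF E1])
    then show ?thesis using e0 by (simp add: Int_commute)
  next
    case ne0: False
    then have E0: "E0 \<in> \<A>" using E(1) by simp
    show ?thesis
    proof (cases "E1 = W")
      case e1: True show ?thesis unfolding e1 by (rule assms(2)[OF E0 ne0])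
    next
      case ne1: False
      have E1: "E1 \<in> \<A>" using E(2) ne1 by blast
      show ?thesis using E0 E1 E(3) by (rule sd_elim[OF assms(1)])
    qed
  qed
qed

lemma fam_props:
  assumes "maximal_admissible_family X \<A>" "A \<in> \<A>"
  shows "A \<noteq> {}" "regular_openin X A" "rho_homogeneous X A" "openin X A"
proof -
  have "A \<noteq> {} \<and> regular_openin X A \<and> rho_homogeneous X A"
    using adm_elem[OF max_adm[OF assms(1)] assms(2)] .
  then show "A \<noteq> {}" "regular_openin X A" "rho_homogeneous X A" "openin X A"
    by (auto intro: reg_open)
qed

lemma fam_disj:
  assumes "maximal_admissible_family X \<A>" "A \<in> \<A>" "A' \<in> \<A>" "A \<noteq> A'"
  shows "A \<inter> A' = {}"
proof -
  have "X closure_of A \<inter> X closure_of A' = {}"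
    using sd_elim[OF adm_sd[OF max_adm[OF assms(1)]] assms(2-4)] .
  moreover have "A \<subseteq> X closure_of A" "A' \<subseteq> X closure_of A'"
    using fam_props(4)[OF assms(1,2)] fam_props(4)[OF assms(1,3)]
    by (simp_all add: closure_of_subset openin_subset)
  ultimately show ?thesis by blast
qed

lemma dense_union:
  assumes reg: "regular_space X" and max: "maximal_admissible_family X \<A>"
    and U: "openin X U" "U \<inter> \<Union>\<A> = {}"
  shows "U = {}"
proof (rule ccontr)
  assume "U \<noteq> {}"
  then obtain x where x: "x \<in> U" by blast
  have UT: "U \<subseteq> topspace X" using U openin_subset by blast
  have c: "closedin X (topspace X - U)" using U by blast
  have "x \<in> topspace X - (topspace X - U)" using x UT by blast
  then obtain V where V: "openin X V" "x \<in> V" "disjnt (topspace X - U) (X closure_of V)"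
    using reg c unfolding regular_space by blast
  have clV: "X closure_of V \<subseteq> U" using V(3) closure_of_subset_topspace[of X V]
    unfolding disjnt_def by blast
  define V' where "V' = roi X V"
  have V'r: "regular_openin X V'" unfolding V'_def by (rule roi_regular)
  have "V \<subseteq> V'" unfolding V'_def using V(1) by (rule open_sub_roi)
  then have V'ne: "V' \<noteq> {}" using V(2) by blast
  have "X closure_of V' \<subseteq> X closure_of V" unfolding V'_def
    by (metis closure_of_closure_of closure_of_mono interior_of_subset)
  then have clV': "X closure_of V' \<subseteq> U" using clV by blast
  define F where "F = {W. regular_openin X W \<and> W \<noteq> {} \<and> W \<subseteq> V'}"
  have "V' \<in> F" using V'r V'ne unfolding F_def by blast
  then have "F \<noteq> {}" by blast
  from min_lepoll_fun[OF this, of "RO X"] obtain W where WF: "W \<in> F" and Wmin0: "\<forall>W'\<in>F. RO X W \<lesssim> RO X W'"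
    by (elim bexE)
  have Wmin: "RO X W \<lesssim> RO X W'" if "W' \<in> F" for W' using Wmin0 that by (rule bspec)
  have W: "regular_openin X W" "W \<noteq> {}" "W \<subseteq> V'" using WF unfolding F_def by simp_all
  have hom: "rho_homogeneous X W"
    unfolding rho_homogeneous_def
  proof (intro ballI impI)
    fix B assume B: "B \<in> RO X W" "B \<noteq> {}"
    then have Br: "regular_openin X B" "B \<subseteq> W" using RO_mem[OF W(1)] by simp_all
    have "RO X B \<subseteq> RO X W" using Br(2) by (auto simp: RO_eq[OF W(1)] RO_eq[OF Br(1)])
    then have "RO X B \<lesssim> RO X W" by (rule subset_imp_lepoll)
    moreover have "B \<in> F" using Br B(2) W(3) unfolding F_def by blast
    then have "RO X W \<lesssim> RO X B" by (rule Wmin)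
    ultimately show "RO X B \<approx> RO X W" by (simp add: lepoll_antisym)
  qed
  have "W \<subseteq> X closure_of W" using reg_open[OF W(1)]
    by (simp add: closure_of_subset openin_subset)
  moreover have clW: "X closure_of W \<subseteq> U" using closure_of_mono[OF W(3)] clV' by blast
  ultimately have WU: "W \<subseteq> U" by blast
  have WnA: "W \<notin> \<A>" using WU W(2) U(2) by blast
  have "admissible_family X (insert W \<A>)"
  proof (rule adm_intro)
    show "A \<noteq> {} \<and> regular_openin X A \<and> rho_homogeneous X A" if "A \<in> insert W \<A>" for A
      using W hom fam_props[OF max] that by blast
    have sd: "strongly_disjoint X \<A>" using adm_sd[OF max_adm[OF max]] .
    have "X closure_of A \<inter> X closure_of W = {}" if "A \<in> \<A>" for A
    proof -
      have "U \<inter> A = {}" using U(2) that by blast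
      then have "U \<inter> X closure_of A = {}" using openin_Int_closure_of_eq_empty[OF U(1)] by blast
      then show ?thesis using clW by blast
    qed
    then show "strongly_disjoint X (insert W \<A>)"
      using sd by (intro sd_insert) blast+
  qed
  then have "insert W \<A> = \<A>" using max_max[OF max] by blast
  then show False using WnA by blast
qed

lemma reg_eq_roi:
  assumes reg: "regular_space X" and max: "maximal_admissible_family X \<A>"
    and B: "regular_openin X B"
  shows "B = roi X (B \<inter> \<Union>\<A>)"
proof
  have O: "openin X (topspace X - X closure_of (\<Union>\<A>))"
    by (meson closedin_closure_of closedin_def)
  have "\<Union>\<A> \<subseteq> topspace X" using fam_props(4)[OF max] openin_subset by blast
  then have "\<Union>\<A> \<subseteq> X closure_of (\<Union>\<A>)" by (rule closure_of_subset)
  then have E: "(topspace X - X closure_of (\<Union>\<A>)) \<inter> \<Union>\<A> = {}" by blast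
  have "topspace X - X closure_of (\<Union>\<A>) = {}"
    by (rule dense_union[OF reg max O E])
  then have D: "X closure_of (\<Union>\<A>) = topspace X" using closure_of_subset_topspace[of X "\<Union>\<A>"] by blast
  have oB: "openin X B" using B by (rule reg_open)
  have "B \<inter> X closure_of (\<Union>\<A>) = B \<inter> X closure_of (B \<inter> \<Union>\<A>)"
    by (rule openin_Int_closure_of_eq[OF oB])
  then have "B \<subseteq> X closure_of (B \<inter> \<Union>\<A>)" using D openin_subset[OF oB] by blast
  then show "B \<subseteq> roi X (B \<inter> \<Union>\<A>)" using oB by (simp add: interior_of_maximal)
  show "roi X (B \<inter> \<Union>\<A>) \<subseteq> B" using roi_mono[of "B \<inter> \<Union>\<A>" B X] reg_roi[OF B]
    by blast
qed

lemma reg_inj: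
  assumes reg: "regular_space X" and max: "maximal_admissible_family X \<A>"
    and B: "regular_openin X B" and B': "regular_openin X B'"
    and eq: "\<And>A. A \<in> \<A> \<Longrightarrow> B \<inter> A = B' \<inter> A"
  shows "B = B'"
proof -
  have "B \<inter> \<Union>\<A> = B' \<inter> \<Union>\<A>" using eq by blast
  have "B = roi X (B \<inter> \<Union>\<A>)" by (rule reg_eq_roi[OF reg max B])
  also have "\<dots> = roi X (B' \<inter> \<Union>\<A>)" using \<open>B \<inter> \<Union>\<A> = B' \<inter> \<Union>\<A>\<close> by (rule arg_cong)
  also have "\<dots> = B'" by (rule reg_eq_roi[OF reg max B', symmetric])
  finally show ?thesis .
qed

theorem lemma5:
  fixes X :: "'a topology" and \<A> :: "'a set set" and H :: "'a set"
  assumes "regular_space X"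
    and "maximal_admissible_family X \<A>"
    and "regular_openin X H"
  shows "RO X H \<approx> (\<Pi>\<^sub>E A \<in> tr \<A> H. RO X A)
     \<and> Pow (tr \<A> H) \<lesssim> RO X H
     \<and> {B. regular_openin X B \<and> tr \<A> B \<subseteq> tr \<A> H} \<lesssim> RO X H"
proof -
  note reg = assms(1) and max = assms(2) and Hr = assms(3)
  define T where "T = tr \<A> H"
  have Tmem: "A \<in> T \<longleftrightarrow> A \<in> \<A> \<and> A \<inter> H \<noteq> {}" for A unfolding T_def tr_def by simp
  have Ho: "openin X H" and Hroi: "roi X H = H" using Hr by (rule reg_open, rule reg_roi)
  define f where "f = (\<lambda>B. \<lambda>A\<in>T. B \<inter> A)"
  have inj: "inj_on f (RO X H)"
  proof (rule inj_onI)
    fix B B' assume B: "B \<in> RO X H" and B': "B' \<in> RO X H" and e: "f B = f B'"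
    have Br: "regular_openin X B" "B \<subseteq> H" using B by (simp_all add: RO_mem[OF Hr])
    have Br': "regular_openin X B'" "B' \<subseteq> H" using B' by (simp_all add: RO_mem[OF Hr])
    show "B = B'"
    proof (rule reg_inj[OF reg max Br(1) Br'(1)])
      fix A assume A: "A \<in> \<A>"
      show "B \<inter> A = B' \<inter> A"
      proof (cases "A \<in> T")
        case True
        then show ?thesis using fun_cong[OF e, of A] unfolding f_def by simp
      next
        case False
        then have "A \<inter> H = {}" using Tmem A by blast
        then show ?thesis using Br(2) Br'(2) by blast
      qed
    qed
  qed
  have img: "f ` RO X H = (\<Pi>\<^sub>E A \<in> T. RO X (A \<inter> H))"
  proof
    show "f ` RO X H \<subseteq> (\<Pi>\<^sub>E A \<in> T. RO X (A \<inter> H))"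
    proof
      fix g assume "g \<in> f ` RO X H"
      then obtain B where B: "B \<in> RO X H" and g: "g = f B" by blast
      have Br: "regular_openin X B" "B \<subseteq> H" using B by (simp_all add: RO_mem[OF Hr])
      have "B \<inter> A \<in> RO X (A \<inter> H)" if "A \<in> T" for A
      proof -
        have Ar: "regular_openin X A" using that Tmem fam_props(2)[OF max] by blast
        show ?thesis using reg_Int[OF Br(1) Ar] Br(2) by (auto simp: RO_mem[OF reg_Int[OF Ar Hr]])
      qed
      then show "g \<in> (\<Pi>\<^sub>E A \<in> T. RO X (A \<inter> H))" unfolding g f_def by simp
    qed
  next
    show "(\<Pi>\<^sub>E A \<in> T. RO X (A \<inter> H)) \<subseteq> f ` RO X H"
    proof
      fix c assume c: "c \<in> (\<Pi>\<^sub>E A \<in> T. RO X (A \<inter> H))"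
      have cA: "regular_openin X (c A) \<and> c A \<subseteq> A \<inter> H" if "A \<in> T" for A
      proof -
        have Ar: "regular_openin X A" using that Tmem fam_props(2)[OF max] by blast
        have "c A \<in> RO X (A \<inter> H)" using c that by (simp add: PiE_iff)
        then show ?thesis by (simp add: RO_mem[OF reg_Int[OF Ar Hr]])
      qed
      define S where "S = (\<Union>A\<in>T. c A)"
      define B where "B = roi X S"
      have So: "openin X S" unfolding S_def using cA reg_open[of X] by blast
      have "S \<subseteq> H" unfolding S_def using cA by blast
      then have "B \<subseteq> H" unfolding B_def using roi_mono[of S H X] Hroi by blast
      then have BH: "B \<in> RO X H" by (simp add: RO_mem[OF Hr] B_def roi_regular)
      have "f B = c"
      proof (rule extensionalityI)
        show "f B \<in> extensional T" unfolding f_def by simp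
        show "c \<in> extensional T" using c by (simp add: PiE_iff)
        fix A assume AT: "A \<in> T"
        have Ao: "openin X A" using AT Tmem fam_props(4)[OF max] by blast
        have AS: "A \<inter> S = c A"
        proof
          show "c A \<subseteq> A \<inter> S" using cA[OF AT] AT unfolding S_def by blast
          show "A \<inter> S \<subseteq> c A"
          proof
            fix y assume y: "y \<in> A \<inter> S"
            then obtain A' where A': "A' \<in> T" "y \<in> c A'" unfolding S_def by blast
            have "y \<in> A'" using cA[OF A'(1)] A'(2) by blast
            then have "A' = A"
            proof (rule contrapos_pp)
              assume ne: "A' \<noteq> A"
              have "A \<in> \<A>" "A' \<in> \<A>" using AT A'(1) Tmem by simp_all
              then have "A \<inter> A' = {}" using fam_disj[OF max] not_sym[OF ne] by blast
              then show "y \<notin> A'" using y by blast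
            qed
            then show "y \<in> c A" using A' by simp
          qed
        qed
        have "A \<inter> B \<subseteq> A \<inter> X closure_of S" unfolding B_def using interior_of_subset[of X "X closure_of S"] by blast
        also have "\<dots> \<subseteq> X closure_of (c A)" using openin_Int_closure_of_subset[OF Ao, of S] AS by simp
        finally have "A \<inter> B \<subseteq> roi X (c A)"
          using Ao unfolding B_def by (simp add: interior_of_maximal openin_Int)
        then have "A \<inter> B \<subseteq> c A" using reg_roi[of X "c A"] cA[OF AT] by blast
        moreover have "c A \<subseteq> A \<inter> B"
          using cA[OF AT] open_sub_roi[OF So] unfolding B_def S_def using AT by blast
        ultimately show "f B A = c A" unfolding f_def using AT by auto
      qed
      then show "c \<in> f ` RO X H" using BH by blast
    qed
  qed
  have P1: "RO X H \<approx> (\<Pi>\<^sub>E A \<in> T. RO X (A \<inter> H))"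
  proof -
    have "bij_betw f (RO X H) (\<Pi>\<^sub>E A \<in> T. RO X (A \<inter> H))" unfolding bij_betw_def using inj img by (rule conjI)
    then show ?thesis unfolding eqpoll_def by blast
  qed
  have hA: "RO X (A \<inter> H) \<approx> RO X A" if "A \<in> T" for A
  proof -
    have A: "A \<in> \<A>" "A \<inter> H \<noteq> {}" using that Tmem by blast+
    have Ar: "regular_openin X A" using fam_props(2)[OF max A(1)] .
    have "A \<inter> H \<in> RO X A" using reg_Int[OF Ar Hr] by (simp add: RO_mem[OF Ar])
    then show ?thesis using fam_props(3)[OF max A(1)] A(2) unfolding rho_homogeneous_def by (elim ballE impE) auto
  qed
  have P2: "(\<Pi>\<^sub>E A \<in> T. RO X (A \<inter> H)) \<approx> (\<Pi>\<^sub>E A \<in> T. RO X A)"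
  proof (rule lepoll_antisym)
    show "(\<Pi>\<^sub>E A \<in> T. RO X (A \<inter> H)) \<lesssim> (\<Pi>\<^sub>E A \<in> T. RO X A)"
      by (rule lepoll_PiE) (simp add: hA eqpoll_imp_lepoll)
    show "(\<Pi>\<^sub>E A \<in> T. RO X A) \<lesssim> (\<Pi>\<^sub>E A \<in> T. RO X (A \<inter> H))"
      by (rule lepoll_PiE) (simp add: hA eqpoll_imp_lepoll eqpoll_sym)
  qed
  have E: "RO X H \<approx> (\<Pi>\<^sub>E A \<in> T. RO X A)" by (rule eqpoll_trans[OF P1 P2])
  have E': "(\<Pi>\<^sub>E A \<in> T. RO X A) \<lesssim> RO X H" by (rule eqpoll_imp_lepoll[OF eqpoll_sym[OF E]])
  have Pw: "Pow T \<lesssim> (\<Pi>\<^sub>E A \<in> T. RO X A)"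
    unfolding lepoll_def
  proof (intro exI conjI)
    let ?g = "\<lambda>S. \<lambda>A\<in>T. if A \<in> S then A else {}"
    show "inj_on ?g (Pow T)"
    proof (rule inj_onI)
      fix S S' assume S: "S \<in> Pow T" and S': "S' \<in> Pow T" and e: "?g S = ?g S'"
      have "A \<in> S \<longleftrightarrow> A \<in> S'" if "A \<in> T" for A
      proof -
        have "A \<noteq> {}" using that Tmem fam_props(1)[OF max] by blast
        then show ?thesis using fun_cong[OF e, of A] that by (auto split: if_splits)
      qed
      then show "S = S'" using S S' by blast
    qed
    show "?g ` Pow T \<subseteq> (\<Pi>\<^sub>E A \<in> T. RO X A)"
    proof
      fix g assume "g \<in> ?g ` Pow T"
      then obtain S where g: "g = ?g S" by blast
      have "(if A \<in> S then A else {}) \<in> RO X A" if "A \<in> T" for A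
      proof -
        have Ar: "regular_openin X A" using that Tmem fam_props(2)[OF max] by blast
        have "regular_openin X {}" by (rule reg_intro) simp_all
        then show ?thesis using Ar by (auto simp: RO_mem[OF Ar])
      qed
      then show "g \<in> (\<Pi>\<^sub>E A \<in> T. RO X A)" unfolding g by simp
    qed
  qed
  have Q: "{B. regular_openin X B \<and> tr \<A> B \<subseteq> T} \<lesssim> (\<Pi>\<^sub>E A \<in> T. RO X A)"
    unfolding lepoll_def
  proof (intro exI conjI)
    show "inj_on f {B. regular_openin X B \<and> tr \<A> B \<subseteq> T}"
    proof (rule inj_onI)
      fix B B' assume B: "B \<in> {B. regular_openin X B \<and> tr \<A> B \<subseteq> T}"
        and B': "B' \<in> {B. regular_openin X B \<and> tr \<A> B \<subseteq> T}" and e: "f B = f B'"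
      show "B = B'"
      proof (rule reg_inj[OF reg max])
        show "regular_openin X B" "regular_openin X B'" using B B' by blast+
        fix A assume A: "A \<in> \<A>"
        show "B \<inter> A = B' \<inter> A"
        proof (cases "A \<in> T")
          case True
          then show ?thesis using fun_cong[OF e, of A] unfolding f_def by simp
        next
          case False
          then have "A \<notin> tr \<A> B" "A \<notin> tr \<A> B'" using B B' by blast+
          then show ?thesis using A unfolding tr_def by blast
        qed
      qed
    qed
    show "f ` {B. regular_openin X B \<and> tr \<A> B \<subseteq> T} \<subseteq> (\<Pi>\<^sub>E A \<in> T. RO X A)"
    proof
      fix g assume "g \<in> f ` {B. regular_openin X B \<and> tr \<A> B \<subseteq> T}"
      then obtain B where B: "regular_openin X B" and g: "g = f B" by blast
      have "B \<inter> A \<in> RO X A" if "A \<in> T" for A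
      proof -
        have Ar: "regular_openin X A" using that Tmem fam_props(2)[OF max] by blast
        show ?thesis using reg_Int[OF B Ar] by (simp add: RO_mem[OF Ar])
      qed
      then show "g \<in> (\<Pi>\<^sub>E A \<in> T. RO X A)" unfolding g f_def by simp
    qed
  qed
  show ?thesis unfolding T_def[symmetric]
    by (intro conjI) (rule E, rule lepoll_trans[OF Pw E'], rule lepoll_trans[OF Q E'])
qed

end
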